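(* Let $\Bbbk$ be a field of characteristic zero. The centreless BCCA satisfies $\mathfrak b=\mathrm{span}\{u_n,v_m\mid n\ge1,\ m\ge0\}$ (this is a basis), and the bracket in this basis is $$[u_n,u_m]=(n-m)(u_{n+m}-4u_{n+m-2}),\quad [u_n,v_m]=(n-m)v_{n+m}-4(n-m-1)v_{n+m-2},\quad [v_n,v_m]=0$$ for all $n,m$ in the respective ranges ($n,m\ge1$ for $u$, $n,m\ge0$ for $v$).
   Context: $\mathcal W=\Bbbk[t,t^{-1}]\partial$ is the Witt algebra with $L_n=-t^{n+1}\partial$; $I(0,-1)=t\Bbbk[t,t^{-1}]dt^{-1}$ with $\mathcal W$-action $f\partial\cdot(g\,dt^{-1})=(fg'-f'g)dt^{-1}$ and basis $M_n=-t^{n+1}dt^{-1}$. The centreless BCCA is $\mathfrak b=\mathcal O\ltimes\mathcal P\subseteq\mathcal W\ltimes I(0,-1)$ (with $I(0,-1)$ abelian), where $\mathcal O=\mathrm{span}\{L_n-L_{-n}\mid n\ge1\}$ and $\mathcal P=\mathrm{span}\{M_n+M_{-n}\mid n\ge0\}$. Define $u_n=-(t+t^{-1})^{n-1}(t^2-1)\partial$ ($n\ge1$) and $v_n=-(t+t^{-1})^n\,t\,dt^{-1}$ ($n\ge0$). *)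

theory Defs
  imports "HOL-Computational_Algebra.Formal_Laurent_Series" "HOL-Library.Product_Plus"
begin

text \<open>Laurent polynomials in t are modelled inside the formal Laurent series 'a fls
  (t = fls_X, t^{-1} = fls_X_inv).  An element f\<partial> of the Witt algebra is
  represented by its coefficient f; an element g dt^{-1} of I(0,-1) by g.
  Elements of W \<ltimes> I(0,-1) are pairs (f, g).\<close>

definition witt_act :: "'a::field_char_0 fls \<Rightarrow> 'a fls \<Rightarrow> 'a fls" where
  "witt_act f g = f * fls_deriv g - fls_deriv f * g"

definition sbr :: "'a::field_char_0 fls \<times> 'a fls \<Rightarrow> 'a fls \<times> 'a fls \<Rightarrow> 'a fls \<times> 'a fls" where
  "sbr x y = (witt_act (fst x) (fst y), witt_act (fst x) (snd y) - witt_act (fst y) (snd x))"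

definition sscale :: "'a::field_char_0 \<Rightarrow> 'a fls \<times> 'a fls \<Rightarrow> 'a fls \<times> 'a fls" where
  "sscale c x = (fls_const c * fst x, fls_const c * snd x)"

definition Lw :: "int \<Rightarrow> 'a::field_char_0 fls \<times> 'a fls" where
  "Lw n = (- fls_X_intpow (n + 1), 0)"

definition Mw :: "int \<Rightarrow> 'a::field_char_0 fls \<times> 'a fls" where
  "Mw n = (0, - fls_X_intpow (n + 1))"

definition Osub :: "('a::field_char_0 fls \<times> 'a fls) set" where
  "Osub = module.span sscale {Lw (int n) - Lw (- int n) | n::nat. n \<ge> 1}"

definition Psub :: "('a::field_char_0 fls \<times> 'a fls) set" where
  "Psub = module.span sscale {Mw (int n) + Mw (- int n) | n::nat. True}"

definition bcca :: "('a::field_char_0 fls \<times> 'a fls) set" where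
  "bcca = {x + y | x y. x \<in> Osub \<and> y \<in> Psub}"

definition ub :: "nat \<Rightarrow> 'a::field_char_0 fls \<times> 'a fls" where
  "ub n = (- (((fls_X + fls_X_inv) ^ (n - 1)) * (fls_X ^ 2 - 1)), 0)"

definition vb :: "nat \<Rightarrow> 'a::field_char_0 fls \<times> 'a fls" where
  "vb n = (0, - (((fls_X + fls_X_inv) ^ n) * fls_X))"

end

theory Submission
  imports Defs
begin


lemma sscale_module: "module (sscale :: 'a::field_char_0 \<Rightarrow> 'a fls \<times> 'a fls \<Rightarrow> _)"
  by unfold_locales (auto simp: sscale_def algebra_simps fls_plus_const[symmetric])

interpretation S: module "sscale :: 'a::field_char_0 \<Rightarrow> 'a fls \<times> 'a fls \<Rightarrow> _"
  by (rule sscale_module)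

lemma XXi: "(fls_X :: 'a::field_char_0 fls) * fls_X_inv = 1"
  by (simp add: fls_X_inv_times_conv_shift fls_X_conv_shift_1)

definition sx :: "'a::field_char_0 fls" where "sx = fls_X + fls_X_inv"

lemma Dsx: "fls_deriv (sx::'a::field_char_0 fls) * (fls_X^2 - 1) = sx^2 - 4"
proof -
  have "fls_deriv (sx::'a fls) * (fls_X^2 - 1) = (1 - fls_X_inv^2) * (fls_X^2 - 1)"
    by (simp add: sx_def)
  also have "... = sx^2 - 4" unfolding sx_def using XXi[where 'a='a]
    by algebra
  finally show ?thesis .
qed

lemma sx_pow_deriv: "sx * fls_deriv (sx^k) = of_nat k * sx^k * fls_deriv (sx :: 'a::field_char_0 fls)"
proof (cases k)
  case (Suc n)
  have "fls_deriv ((sx :: 'a fls)^Suc n) = of_nat (Suc n) * sx^n * fls_deriv sx"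
    using fls_deriv_power[of "sx :: 'a fls" "Suc n"] by simp
  thus ?thesis using Suc by (simp add: algebra_simps)
qed simp

lemma sx_nz: "(sx :: 'a::field_char_0 fls) \<noteq> 0"
proof
  assume "(sx :: 'a fls) = 0"
  hence "fls_nth (sx :: 'a fls) 1 = 0" by simp
  thus False by (simp add: sx_def)
qed

lemma ub_alt: "ub (Suc a) = (- (sx^a * (fls_X^2 - 1)), 0)"
  by (simp add: ub_def sx_def)

lemma vb_alt: "vb a = (0, - (sx^a * fls_X))"
  by (simp add: vb_def sx_def)

lemma const_int: "fls_const (of_int z :: 'a::field_char_0) = (of_int z :: 'a fls)"
  by (simp add: fls_of_int)

lemma wa_uu: "sx * witt_act (-(sx^a*h)) (-(sx^b*h)) =
   h*h*(sx^a * (sx*fls_deriv(sx^b)) - (sx*fls_deriv(sx^a))*sx^b :: 'a::field_char_0 fls)"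
  unfolding witt_act_def by (simp add: algebra_simps)

lemma br_uu:
  assumes "1 \<le> n" "1 \<le> m"
  shows "sbr (ub n) (ub m :: 'a::field_char_0 fls \<times> 'a fls) =
            sscale (of_int (int n - int m)) (ub (n + m) - sscale 4 (ub (n + m - 2)))"
proof -
  obtain a b where ab: "n = Suc a" "m = Suc b" using assms by (metis Suc_le_D One_nat_def)
  show ?thesis
  proof (cases "a + b = 0")
    case True
    then show ?thesis using ab by (simp add: sbr_def sscale_def witt_act_def)
  next
    case False
    then obtain c where c: "a + b = Suc c" using not0_implies_Suc by blast
    define h :: "'a fls" where "h = fls_X^2 - 1"
    have Dh: "fls_deriv sx * h = sx^2 - 4" unfolding h_def by (rule Dsx)
    have nm: "n + m = Suc (Suc (Suc c))" "n + m - 2 = Suc c" using ab c by auto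
    have L: "sx * witt_act (-(sx^a*h)) (-(sx^b*h)) = sx * ((of_nat b - of_nat a) * sx^c * h * (sx^2 - 4))"
    proof -
      have "sx * witt_act (-(sx^a*h)) (-(sx^b*h)) = h*h*(sx^a * (of_nat b * sx^b * fls_deriv sx) - (of_nat a * sx^a * fls_deriv sx)*sx^b)"
        by (simp only: wa_uu sx_pow_deriv)
      also have "... = (of_nat b - of_nat a) * sx^(a+b) * h * (fls_deriv sx * h)"
        by (simp add: algebra_simps power_add)
      also have "... = (of_nat b - of_nat a) * sx^(a+b) * h * (sx^2 - 4)"
        by (simp only: Dh)
      also have "... = sx * ((of_nat b - of_nat a) * sx^c * h * (sx^2 - 4))"
        by (simp add: c algebra_simps)
      finally show ?thesis .
    qed
    have L2: "witt_act (-(sx^a*h)) (-(sx^b*h)) = (of_nat b - of_nat a) * sx^c * h * (sx^2 - 4)"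
      using L sx_nz by auto
    have u1: "ub (n+m) = (-(sx^(Suc (Suc c))*h), 0)" "ub (n+m-2) = (-(sx^c*h), 0)"
      unfolding nm h_def by (simp_all add: ub_alt)
    have u2: "ub n = (-(sx^a*h), 0)" "ub m = (-(sx^b*h), 0)"
      unfolding ab h_def ub_alt by simp_all
    have k: "fls_const (of_int (int n - int m) :: 'a) = of_nat a - of_nat b"
      using const_int[of "int n - int m", where 'a='a] ab by simp
    have w0: "witt_act (x::'a fls) 0 = 0" for x by (simp add: witt_act_def)
    show ?thesis
      apply (simp only: u1 u2 sbr_def sscale_def fst_conv snd_conv fst_diff snd_diff L2 k w0)
      apply (simp add: algebra_simps power2_eq_square)
      done
  qed
qed

lemma sxX: "sx * fls_X = (fls_X^2 + 1 :: 'a::field_char_0 fls)"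
  unfolding sx_def using XXi[where 'a='a] by algebra

lemma wa_uv: "sx * witt_act (-(sx^a*h)) (-(sx^b*fls_X)) =
   sx^a*h*((sx*fls_deriv(sx^b))*fls_X + sx*sx^b) - ((sx*fls_deriv(sx^a))*h + sx*sx^a*fls_deriv h)*(sx^b*(fls_X :: 'a::field_char_0 fls))"
  unfolding witt_act_def by (simp add: algebra_simps)

lemma br_uv:
  assumes "1 \<le> n"
  shows "sbr (ub n) (vb m :: 'a::field_char_0 fls \<times> 'a fls) =
            sscale (of_int (int n - int m)) (vb (n + m))
            - sscale (4 * of_int (int n - int m - 1)) (vb (n + m - 2))"
proof -
  obtain a where ab: "n = Suc a" using assms by (metis Suc_le_D One_nat_def)
  define h :: "'a fls" where "h = fls_X^2 - 1"
  have Dh: "fls_deriv sx * h = sx^2 - 4" unfolding h_def by (rule Dsx)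
  have Dh2: "fls_deriv h = 2 * fls_X" unfolding h_def by (simp add: fls_deriv_power)
  have w0: "witt_act (x::'a fls) 0 = 0" "witt_act 0 (x::'a fls) = 0" for x by (simp_all add: witt_act_def)
  have hx: "h - 2*fls_X*fls_X = -(sx*fls_X)" using sxX[where 'a='a] by (simp add: h_def algebra_simps power2_eq_square)
  have u2: "ub n = (-(sx^a*h), 0)" "vb m = (0, -(sx^m*fls_X))"
      unfolding ab h_def ub_alt vb_alt by simp_all
  have k: "fls_const (of_int (int n - int m) :: 'a) = of_nat a + 1 - of_nat m"
      "fls_const (4 * of_int (int n - int m - 1) :: 'a) = 4 * (of_nat a - of_nat m)"
  proof -
    have f4: "fls_const (4 * x :: 'a) = 4 * fls_const x" for x by (metis fls_const_mult_const fls_const_numeral)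
    show "fls_const (of_int (int n - int m) :: 'a) = of_nat a + 1 - of_nat m"
      using const_int[of "int n - int m", where 'a='a] ab by simp
    show "fls_const (4 * of_int (int n - int m - 1) :: 'a) = 4 * (of_nat a - of_nat m)"
      unfolding f4 const_int using ab by simp
  qed
  show ?thesis
  proof (cases "a + m = 0")
    case True
    then have am: "a = 0" "m = 0" by auto
    have "witt_act (-(sx^a*h)) (-(sx^m*fls_X)) = - (fls_X^2 + 1)"
      unfolding am h_def witt_act_def by (simp add: fls_deriv_power algebra_simps power2_eq_square)
    moreover have "vb (n + m) = (0, - (fls_X^2 + 1 :: 'a fls))" using am ab by (simp add: vb_alt sxX)
    ultimately show ?thesis
      apply (simp only: u2 sbr_def sscale_def fst_conv snd_conv fst_diff snd_diff k w0)
      using am ab by (simp add: prod_eq_iff)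
  next
    case False
    then obtain c where c: "a + m = Suc c" using not0_implies_Suc by blast
    have nm: "n + m = Suc (Suc c)" "n + m - 2 = c" using ab c by auto
    have L: "sx * witt_act (-(sx^a*h)) (-(sx^m*fls_X)) = sx * (sx^c * fls_X * ((of_nat m - of_nat a) * (sx^2 - 4) - sx^2))"
    proof -
      have "sx * witt_act (-(sx^a*h)) (-(sx^m*fls_X)) = sx^a*h*((of_nat m * sx^m * fls_deriv sx)*fls_X + sx*sx^m) - ((of_nat a * sx^a * fls_deriv sx)*h + sx*sx^a*(2*fls_X))*(sx^m*fls_X)"
        by (simp only: wa_uv sx_pow_deriv Dh2)
      also have "... = sx^(a+m) * ((of_nat m - of_nat a) * (fls_deriv sx * h) * fls_X + sx * (h - 2 * fls_X * fls_X))"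
        by (simp add: algebra_simps power_add)
      also have "... = sx^(a+m) * ((of_nat m - of_nat a) * (sx^2 - 4) * fls_X - sx * (sx * fls_X))"
        by (simp only: Dh hx) (simp add: algebra_simps)
      also have "... = sx * (sx^c * fls_X * ((of_nat m - of_nat a) * (sx^2 - 4) - sx^2))"
        by (simp add: c algebra_simps power2_eq_square)
      finally show ?thesis .
    qed
    have L2: "witt_act (-(sx^a*h)) (-(sx^m*fls_X)) = sx^c * fls_X * ((of_nat m - of_nat a) * (sx^2 - 4) - sx^2)"
      using L sx_nz by auto
    show ?thesis
      apply (simp only: nm u2 vb_alt sbr_def sscale_def fst_conv snd_conv fst_diff snd_diff L2 k w0)
      apply (simp add: algebra_simps power2_eq_square)
      done
  qed
qed

lemma br_vv: "sbr (vb n) (vb m :: 'a::field_char_0 fls \<times> 'a fls) = 0"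
  by (simp add: sbr_def vb_def witt_act_def zero_prod_def)

lemma sx_subdeg: "fls_subdegree (sx :: 'a::field_char_0 fls) = -1"
  by (rule fls_subdegree_eqI) (simp_all add: sx_def)

lemma h_nz: "(fls_X^2 - 1 :: 'a::field_char_0 fls) \<noteq> 0"
proof
  assume "(fls_X^2 - 1 :: 'a fls) = 0"
  hence "fls_nth (fls_X^2 - 1 :: 'a fls) 0 = 0" by simp
  thus False by simp
qed

lemma h_subdeg: "fls_subdegree (fls_X^2 - 1 :: 'a::field_char_0 fls) = 0"
  by (rule fls_subdegree_eqI) simp_all

lemma fls_subdegree_neg: "fls_subdegree (- f) = fls_subdegree (f :: 'a::field_char_0 fls)"
  by (rule fls_uminus_subdegree)

lemma ub_fst: "fst (ub (Suc a) :: 'a::field_char_0 fls \<times> 'a fls) \<noteq> 0 \<and>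
   fls_subdegree (fst (ub (Suc a) :: 'a fls \<times> 'a fls)) = - int a"
  using sx_nz[where 'a='a] h_nz[where 'a='a]
  by (simp add: ub_alt fls_subdegree_neg fls_subdegree_pow sx_subdeg h_subdeg)

lemma vb_snd: "snd (vb m :: 'a::field_char_0 fls \<times> 'a fls) \<noteq> 0 \<and>
   fls_subdegree (snd (vb m :: 'a fls \<times> 'a fls)) = 1 - int m"
  using sx_nz[where 'a='a]
  by (simp add: vb_alt fls_subdegree_neg fls_subdegree_pow sx_subdeg)

lemma ub_snd: "snd (ub n) = 0" by (simp add: ub_def)
lemma vb_fst: "fst (vb n) = 0" by (simp add: vb_def)

lemma indep_fls:
  fixes phi :: "'b \<Rightarrow> 'a::field_char_0 fls"
  assumes fin: "finite T" and nz: "\<And>x. x \<in> T \<Longrightarrow> phi x \<noteq> 0"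
    and inj: "inj_on (\<lambda>x. fls_subdegree (phi x)) T"
    and sum0: "(\<Sum>x\<in>T. fls_const (c x) * phi x) = 0"
  shows "\<forall>x\<in>T. c x = 0"
proof (rule ccontr)
  assume "\<not> (\<forall>x\<in>T. c x = 0)"
  define S where "S = {x\<in>T. c x \<noteq> 0}"
  have Sne: "S \<noteq> {}" and Sfin: "finite S" using \<open>\<not> _\<close> fin by (auto simp: S_def)
  define d where "d = Min ((\<lambda>x. fls_subdegree (phi x)) ` S)"
  have "d \<in> (\<lambda>x. fls_subdegree (phi x)) ` S"
    unfolding d_def using Sne Sfin by (intro Min_in) auto
  then obtain x0 where x0: "x0 \<in> S" "fls_subdegree (phi x0) = d" by auto
  have le: "x \<in> S \<Longrightarrow> d \<le> fls_subdegree (phi x)" for x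
    unfolding d_def using Sfin by auto
  have z: "fls_nth (fls_const (c x) * phi x) d = 0" if "x \<in> T" "x \<noteq> x0" for x
  proof (cases "c x = 0")
    case False
    then have "x \<in> S" using that by (auto simp: S_def)
    then have "d \<le> fls_subdegree (phi x)" by (rule le)
    moreover have "fls_subdegree (phi x) \<noteq> d"
      using inj that x0 \<open>x \<in> S\<close> unfolding S_def inj_on_def by auto
    ultimately show ?thesis by simp
  qed simp
  have x0T: "x0 \<in> T" "c x0 \<noteq> 0" using x0 by (auto simp: S_def)
  have "0 = fls_nth (\<Sum>x\<in>T. fls_const (c x) * phi x) d" using sum0 by simp
  also have "... = (\<Sum>x\<in>T. fls_nth (fls_const (c x) * phi x) d)" by (rule fls_nth_sum)
  also have "... = fls_nth (fls_const (c x0) * phi x0) d"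
  proof -
    have "(\<Sum>x\<in>T-{x0}. fls_nth (fls_const (c x) * phi x) d) = 0"
      by (rule sum.neutral) (use z in blast)
    then show ?thesis by (simp add: sum.remove[OF fin x0T(1)])
  qed
  also have "... = c x0 * fls_nth (phi x0) d" by simp
  finally show False using x0T nz[of x0] x0 nth_fls_subdegree_nonzero[of "phi x0"] by auto
qed



lemma U_cases: "v \<in> ub ` {1..} \<Longrightarrow> \<exists>a. v = ub (Suc a)"
proof -
  assume "v \<in> ub ` {1..}"
  then obtain n where "n \<ge> 1" "v = ub n" by auto
  then show ?thesis by (intro exI[of _ "n - 1"]) simp
qed

lemma U_props: "v \<in> (ub ` {1..} :: ('a::field_char_0 fls \<times> 'a fls) set) \<Longrightarrow> fst v \<noteq> 0 \<and> snd v = 0"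
  using U_cases[of v] ub_fst ub_snd by force

lemma V_props: "v \<in> (vb ` UNIV :: ('a::field_char_0 fls \<times> 'a fls) set) \<Longrightarrow> fst v = 0 \<and> snd v \<noteq> 0"
  using vb_snd vb_fst by force

lemma U_inj: "inj_on (\<lambda>v. fls_subdegree (fst v)) (ub ` {1..} :: ('a::field_char_0 fls \<times> 'a fls) set)"
proof (rule inj_onI)
  fix x y :: "'a fls \<times> 'a fls"
  assume x: "x \<in> ub ` {1..}" and y: "y \<in> ub ` {1..}" and e: "fls_subdegree (fst x) = fls_subdegree (fst y)"
  obtain a b where "x = ub (Suc a)" "y = ub (Suc b)" using U_cases x y by blast
  with e ub_fst[of a, where 'a='a] ub_fst[of b, where 'a='a] show "x = y" by simp
qed

lemma V_inj: "inj_on (\<lambda>v. fls_subdegree (snd v)) (vb ` UNIV :: ('a::field_char_0 fls \<times> 'a fls) set)"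
proof (rule inj_onI)
  fix x y :: "'a fls \<times> 'a fls"
  assume x: "x \<in> vb ` UNIV" and y: "y \<in> vb ` UNIV" and e: "fls_subdegree (snd x) = fls_subdegree (snd y)"
  obtain a b where "x = vb a" "y = vb b" using x y by blast
  with e vb_snd[of a, where 'a='a] vb_snd[of b, where 'a='a] show "x = y" by simp
qed

lemma indep_UV: "module.independent sscale ((ub ` {1..} \<union> vb ` UNIV) :: ('a::field_char_0 fls \<times> 'a fls) set)"
  unfolding S.independent_explicit_module
proof (intro allI impI)
  fix t :: "('a fls \<times> 'a fls) set" and u v
  let ?U = "ub ` {1..} :: ('a fls \<times> 'a fls) set" and ?V = "vb ` UNIV :: ('a fls \<times> 'a fls) set"
  assume fin: "finite t" and sub: "t \<subseteq> ?U \<union> ?V" and s0: "(\<Sum>v\<in>t. sscale (u v) v) = 0" and vt: "v \<in> t"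
  have f0: "(\<Sum>v\<in>t. fls_const (u v) * fst v) = 0"
    using arg_cong[OF s0, of fst] by (simp add: fst_sum sscale_def)
  have s0': "(\<Sum>v\<in>t. fls_const (u v) * snd v) = 0"
    using arg_cong[OF s0, of snd] by (simp add: snd_sum sscale_def)
  have "(\<Sum>v\<in>t - ?U. fls_const (u v) * fst v) = 0"
  proof (rule sum.neutral, rule ballI)
    fix x assume "x \<in> t - ?U"
    then have "x \<in> ?V" using sub by blast
    then show "fls_const (u x) * fst x = 0" using V_props[of x] by simp
  qed
  with f0 have f1: "(\<Sum>v\<in>t \<inter> ?U. fls_const (u v) * fst v) = 0"
    using sum.Int_Diff[OF fin, of "\<lambda>v. fls_const (u v) * fst v" ?U] by simp
  have "(\<Sum>v\<in>t - ?V. fls_const (u v) * snd v) = 0"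
  proof (rule sum.neutral, rule ballI)
    fix x assume "x \<in> t - ?V"
    then have "x \<in> ?U" using sub by blast
    then show "fls_const (u x) * snd x = 0" using U_props[of x] by simp
  qed
  with s0' have s1: "(\<Sum>v\<in>t \<inter> ?V. fls_const (u v) * snd v) = 0"
    using sum.Int_Diff[OF fin, of "\<lambda>v. fls_const (u v) * snd v" ?V] by simp
  have A: "\<forall>x\<in>t \<inter> ?U. u x = 0"
    apply (rule indep_fls[where phi=fst and c=u, OF _ _ _ f1])
    using fin apply simp
    using U_props apply blast
    by (rule inj_on_subset[OF U_inj]) blast
  have B: "\<forall>x\<in>t \<inter> ?V. u x = 0"
    apply (rule indep_fls[where phi=snd and c=u, OF _ _ _ s1])
    using fin apply simp
    using V_props apply blast
    by (rule inj_on_subset[OF V_inj]) blast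
  show "u v = 0" using A B vt sub by blast
qed

lemma ub_fst': "n \<ge> 1 \<Longrightarrow> fst (ub n :: 'a::field_char_0 fls \<times> 'a fls) \<noteq> 0 \<and>
   fls_subdegree (fst (ub n :: 'a fls \<times> 'a fls)) = 1 - int n"
  using ub_fst[of "n - 1", where 'a='a] by simp

lemma inj_ub: "inj_on (ub :: nat \<Rightarrow> 'a::field_char_0 fls \<times> 'a fls) {1..}"
proof (rule inj_onI)
  fix x y :: nat assume x: "x \<in> {1..}" and y: "y \<in> {1..}" and e: "ub x = (ub y :: 'a fls \<times> 'a fls)"
  have "fls_subdegree (fst (ub x :: 'a fls \<times> 'a fls)) = fls_subdegree (fst (ub y :: 'a fls \<times> 'a fls))"
    using e by simp
  moreover have "fls_subdegree (fst (ub x :: 'a fls \<times> 'a fls)) = 1 - int x"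
    using ub_fst'[of x, where 'a='a] x by simp
  moreover have "fls_subdegree (fst (ub y :: 'a fls \<times> 'a fls)) = 1 - int y"
    using ub_fst'[of y, where 'a='a] y by simp
  ultimately show "x = y" by linarith
qed

lemma inj_vb: "inj (vb :: nat \<Rightarrow> 'a::field_char_0 fls \<times> 'a fls)"
proof (rule injI)
  fix x y :: nat assume e: "vb x = (vb y :: 'a fls \<times> 'a fls)"
  have "fls_subdegree (snd (vb x :: 'a fls \<times> 'a fls)) = fls_subdegree (snd (vb y :: 'a fls \<times> 'a fls))"
    using e by simp
  moreover have "fls_subdegree (snd (vb x :: 'a fls \<times> 'a fls)) = 1 - int x"
    using vb_snd[of x, where 'a='a] by simp
  moreover have "fls_subdegree (snd (vb y :: 'a fls \<times> 'a fls)) = 1 - int y"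
    using vb_snd[of y, where 'a='a] by simp
  ultimately show "x = y" by linarith
qed

lemma disj_UV: "ub ` {1..} \<inter> vb ` UNIV = ({} :: ('a::field_char_0 fls \<times> 'a fls) set)"
proof (rule equals0I)
  fix v :: "'a fls \<times> 'a fls" assume v: "v \<in> ub ` {1..} \<inter> vb ` UNIV"
  have "fst v \<noteq> 0" using U_props[OF IntD1[OF v]] by simp
  moreover have "fst v = 0" using V_props[OF IntD2[OF v]] by simp
  ultimately show False by simp
qed



definition ms :: "'a::field_char_0 fls \<times> 'a fls \<Rightarrow> 'a fls \<times> 'a fls" where
  "ms x = (sx * fst x, sx * snd x)"

lemma ms_span:
  assumes G: "ms ` G \<subseteq> S.span G" and x: "x \<in> S.span G"
  shows "ms x \<in> S.span (G :: ('a::field_char_0 fls \<times> 'a fls) set)"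
proof -
  have "S.span G \<subseteq> {x. ms x \<in> S.span G}"
  proof (rule S.span_minimal)
    show "G \<subseteq> {x. ms x \<in> S.span G}" using G by auto
    show "S.subspace {x. ms x \<in> S.span G}"
    proof (rule S.subspaceI)
      show "0 \<in> {x. ms x \<in> S.span G}" by (simp add: ms_def zero_prod_def[symmetric] S.span_zero)
      fix x y assume "x \<in> {x. ms x \<in> S.span G}" "y \<in> {x. ms x \<in> S.span G}"
      then have "ms x + ms y \<in> S.span G" by (simp add: S.span_add)
      moreover have "ms (x + y) = ms x + ms y" by (simp add: ms_def algebra_simps)
      ultimately show "x + y \<in> {x. ms x \<in> S.span G}" by simp
    next
      fix c x assume "x \<in> {x. ms x \<in> S.span G}"
      then have "sscale c (ms x) \<in> S.span G" by (simp add: S.span_scale)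
      moreover have "ms (sscale c x) = sscale c (ms x)" by (simp add: ms_def sscale_def algebra_simps)
      ultimately show "sscale c x \<in> {x. ms x \<in> S.span G}" by simp
    qed
  qed
  with x show ?thesis by auto
qed

lemma ms_diff: "ms (x - y) = ms x - ms y" by (simp add: ms_def algebra_simps)

lemma ms_ub: "ms (ub (Suc a)) = ub (Suc (Suc a))"
  by (simp add: ms_def ub_alt)

lemma ms_vb: "ms (vb m) = vb (Suc m)"
  by (simp add: ms_def vb_alt)

lemma X_ip: "(fls_X :: 'a::field_char_0 fls) = fls_X_intpow 1" "(fls_X_inv :: 'a fls) = fls_X_intpow (-1)"
  by (simp_all add: fls_X_conv_shift_1 fls_X_inv_conv_shift_1)

lemma sx_ip: "sx * fls_X_intpow j = fls_X_intpow (j+1) + (fls_X_intpow (j - 1) :: 'a::field_char_0 fls)"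
  unfolding sx_def X_ip distrib_right fls_X_intpow_times_fls_X_intpow by (simp add: add.commute)

definition Aa :: "int \<Rightarrow> 'a::field_char_0 fls \<times> 'a fls" where "Aa k = Lw k - Lw (-k)"
definition Bb :: "int \<Rightarrow> 'a::field_char_0 fls \<times> 'a fls" where "Bb k = Mw k + Mw (-k)"

lemma Aa_alt: "Aa k = (fls_X_intpow (1-k) - fls_X_intpow (k+1), 0)"
  by (simp add: Aa_def Lw_def)

lemma Bb_alt: "Bb k = (0, - (fls_X_intpow (1-k) + fls_X_intpow (k+1)))"
  by (simp add: Bb_def Mw_def add.commute)

lemma ms_Aa: "ms (Aa k) = Aa (k+1) + Aa (k - 1)"
  apply (simp only: ms_def Aa_alt fst_conv snd_conv right_diff_distrib mult_zero_right sx_ip)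
  apply (simp add: algebra_simps)
  done

lemma ms_Bb: "ms (Bb k) = Bb (k+1) + Bb (k - 1)"
  apply (simp only: ms_def Bb_alt fst_conv snd_conv distrib_left mult_zero_right mult_minus_right sx_ip)
  apply (simp add: algebra_simps)
  done

lemma Aa0: "Aa 0 = 0" by (simp add: Aa_def)
lemma Bbneg: "Bb (-k) = Bb k" by (simp add: Bb_def add.commute)

lemma ip0: "fls_X_intpow 0 = 1" by simp
lemma ip2: "(fls_X_intpow 2 :: 'a::field_char_0 fls) = fls_X^2"
  unfolding X_ip fls_X_intpow_power by simp

lemma Aa1: "Aa 1 = ub 1"
  by (simp add: Aa_def Lw_def ub_def ip2)

lemma Bb0: "Bb 0 = sscale 2 (vb 0)"
  by (simp add: Bb_def Mw_def vb_def sscale_def X_ip)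

lemma Bb1: "Bb 1 = (vb 1 :: 'a::field_char_0 fls \<times> 'a fls)"
  using sxX[where 'a='a] by (simp add: Bb_def Mw_def vb_alt ip2 add.commute)

lemma GO_eq: "{Lw (int n) - Lw (- int n) | n::nat. n \<ge> 1} = Aa ` int ` {1..}"
  by (auto simp: Aa_def)

lemma GP_eq: "{Mw (int n) + Mw (- int n) | n::nat. True} = Bb ` int ` UNIV"
  by (auto simp: Bb_def)

lemma Osub_eq: "(Osub :: ('a::field_char_0 fls \<times> 'a fls) set) = S.span (ub ` {1..})"
proof -
  let ?G = "Aa ` int ` {1..} :: ('a fls \<times> 'a fls) set"
  let ?U = "ub ` {1..} :: ('a fls \<times> 'a fls) set"
  have msG: "ms ` ?G \<subseteq> S.span ?G"
  proof
    fix y assume "y \<in> ms ` ?G"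
    then obtain n :: nat where n: "n \<ge> 1" "y = ms (Aa (int n))" by auto
    have "Aa (int n + 1) \<in> ?G" using n by (auto intro!: image_eqI[of _ _ "Suc n"])
    moreover have "Aa (int n - 1) \<in> S.span ?G"
    proof (cases "n = 1")
      case True then show ?thesis by (simp add: Aa0 S.span_zero)
    next
      case False
      then have "Aa (int n - 1) \<in> ?G" using n by (auto intro!: image_eqI[of _ _ "n - 1"])
      then show ?thesis by (rule S.span_base)
    qed
    ultimately have "Aa (int n + 1) + Aa (int n - 1) \<in> S.span ?G"
      by (rule S.span_add[OF S.span_base]) 
    then show "y \<in> S.span ?G" unfolding n ms_Aa .
  qed
  have msU: "ms ` ?U \<subseteq> S.span ?U"
  proof
    fix y assume "y \<in> ms ` ?U"
    then obtain n :: nat where n: "n \<ge> 1" "y = ms (ub n)" by auto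
    then obtain a where "n = Suc a" by (metis Suc_le_D One_nat_def)
    then have "y = ub (Suc (Suc a))" using n ms_ub[where 'a='a] by simp
    then show "y \<in> S.span ?U" by (intro S.span_base) auto
  qed
  have U1: "ub (Suc a) \<in> S.span ?G" for a
  proof (induction a)
    case 0
    have "Aa 1 \<in> ?G" by (auto intro!: image_eqI[of _ _ "1"])
    then have "Aa 1 \<in> S.span ?G" by (rule S.span_base)
    then show ?case using Aa1[where 'a='a] by simp
  next
    case (Suc a)
    then show ?case using ms_span[OF msG Suc] ms_ub[where 'a='a] by simp
  qed
  have G1: "Aa (int (Suc k)) \<in> S.span ?U \<and> Aa (int (Suc (Suc k))) \<in> S.span ?U" for k
  proof (induction k)
    case 0
    have "Aa 1 \<in> S.span ?U" using Aa1[where 'a='a] by (simp add: S.span_base)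
    moreover have "Aa 2 = (ms (Aa 1) :: 'a fls \<times> 'a fls)" using ms_Aa[of 1, where 'a='a] by (simp add: Aa0)
    then have "Aa 2 = (ub 2 :: 'a fls \<times> 'a fls)" using ms_ub[of 0, where 'a='a] Aa1[where 'a='a] by (simp add: numeral_2_eq_2)
    then have "Aa 2 \<in> S.span ?U" by (simp add: S.span_base)
    ultimately show ?case by simp
  next
    case (Suc k)
    have "Aa (int (Suc (Suc (Suc k)))) = (ms (Aa (int (Suc (Suc k)))) - Aa (int (Suc k)) :: 'a fls \<times> 'a fls)"
      using ms_Aa[of "int (Suc (Suc k))", where 'a='a] by (simp add: algebra_simps)
    also have "... \<in> S.span ?U" using Suc ms_span[OF msU] by (intro S.span_diff) auto
    finally show ?case using Suc by simp
  qed
  have "S.span ?G = S.span ?U"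
  proof (subst S.span_eq, rule conjI)
    show "?G \<subseteq> S.span ?U"
    proof
      fix y assume "y \<in> ?G"
      then obtain n :: nat where "n \<ge> 1" "y = Aa (int n)" by auto
      then obtain k where "y = Aa (int (Suc k))" by (metis Suc_le_D One_nat_def)
      then show "y \<in> S.span ?U" using G1 by simp
    qed
    show "?U \<subseteq> S.span ?G"
    proof
      fix y assume "y \<in> ?U"
      then obtain a where "y = ub (Suc a)" using U_cases by blast
      then show "y \<in> S.span ?G" using U1 by simp
    qed
  qed
  then show ?thesis unfolding Osub_def GO_eq by simp
qed

lemma Psub_eq: "(Psub :: ('a::field_char_0 fls \<times> 'a fls) set) = S.span (vb ` UNIV)"
proof -
  let ?G = "Bb ` int ` UNIV :: ('a fls \<times> 'a fls) set"
  let ?V = "vb ` UNIV :: ('a fls \<times> 'a fls) set"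
  have msG: "ms ` ?G \<subseteq> S.span ?G"
  proof
    fix y assume "y \<in> ms ` ?G"
    then obtain n :: nat where n: "y = ms (Bb (int n))" by auto
    have "Bb (int n + 1) \<in> ?G" by (auto intro!: image_eqI[of _ _ "Suc n"])
    moreover have "Bb (int n - 1) \<in> ?G"
    proof (cases "n = 0")
      case True
      have "Bb (int n - 1) = (Bb 1 :: 'a fls \<times> 'a fls)" using True Bbneg[of 1, where 'a='a] by simp
      then show ?thesis by (auto intro!: image_eqI[of _ _ "1"])
    next
      case False
      then show ?thesis by (auto intro!: image_eqI[of _ _ "n - 1"])
    qed
    ultimately have "Bb (int n + 1) + Bb (int n - 1) \<in> S.span ?G"
      by (intro S.span_add S.span_base)
    then show "y \<in> S.span ?G" unfolding n ms_Bb .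
  qed
  have msV: "ms ` ?V \<subseteq> S.span ?V"
  proof
    fix y assume "y \<in> ms ` ?V"
    then obtain n :: nat where n: "y = ms (vb n)" by auto
    then have "y = vb (Suc n)" using ms_vb[where 'a='a] by simp
    then show "y \<in> S.span ?V" by (intro S.span_base) auto
  qed
  have V1: "vb a \<in> S.span ?G" for a
  proof (induction a)
    case 0
    have "Bb 0 \<in> ?G" by (auto intro!: image_eqI[of _ _ "0"])
    then have "sscale (1/2) (Bb 0) \<in> S.span ?G" by (intro S.span_scale S.span_base)
    moreover have "sscale (1/2) (Bb 0) = (vb 0 :: 'a fls \<times> 'a fls)"
      using Bb0[where 'a='a] by simp
    ultimately show ?case by simp
  next
    case (Suc a)
    then show ?case using ms_span[OF msG Suc] ms_vb[where 'a='a] by simp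
  qed
  have G1: "Bb (int k) \<in> S.span ?V \<and> Bb (int (Suc k)) \<in> S.span ?V" for k
  proof (induction k)
    case 0
    have "vb 0 \<in> ?V" "vb 1 \<in> ?V" by auto
    then have "sscale 2 (vb 0) \<in> S.span ?V" "vb 1 \<in> S.span ?V" by (auto intro: S.span_scale S.span_base)
    then show ?case using Bb0[where 'a='a] Bb1[where 'a='a] by simp
  next
    case (Suc k)
    have "Bb (int (Suc (Suc k))) = (ms (Bb (int (Suc k))) - Bb (int k) :: 'a fls \<times> 'a fls)"
      using ms_Bb[of "int (Suc k)", where 'a='a] by (simp add: algebra_simps)
    also have "... \<in> S.span ?V" using Suc ms_span[OF msV] by (intro S.span_diff) auto
    finally show ?case using Suc by simp
  qed
  have "S.span ?G = S.span ?V"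
  proof (subst S.span_eq, rule conjI)
    show "?G \<subseteq> S.span ?V" using G1 by auto
    show "?V \<subseteq> S.span ?G" using V1 by auto
  qed
  then show ?thesis unfolding Psub_def GP_eq by simp
qed

lemma bcca_eq: "(bcca :: ('a::field_char_0 fls \<times> 'a fls) set) = S.span (ub ` {1..} \<union> vb ` UNIV)"
  unfolding bcca_def S.span_Un Osub_eq Psub_eq by blast


theorem corollary4p34:
  shows "(bcca :: ('a::field_char_0 fls \<times> 'a fls) set)
           = module.span sscale (ub ` {1..} \<union> vb ` UNIV)
    \<and> module.independent sscale ((ub ` {1..} \<union> vb ` UNIV) :: ('a fls \<times> 'a fls) set)
    \<and> inj_on (ub :: nat \<Rightarrow> 'a fls \<times> 'a fls) {1..}
    \<and> inj (vb :: nat \<Rightarrow> 'a fls \<times> 'a fls)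
    \<and> ub ` {1..} \<inter> vb ` UNIV = ({} :: ('a fls \<times> 'a fls) set)
    \<and> (\<forall>n m. 1 \<le> n \<longrightarrow> 1 \<le> m \<longrightarrow>
          sbr (ub n) (ub m :: 'a fls \<times> 'a fls) =
            sscale (of_int (int n - int m)) (ub (n + m) - sscale 4 (ub (n + m - 2))))
    \<and> (\<forall>n m. 1 \<le> n \<longrightarrow>
          sbr (ub n) (vb m :: 'a fls \<times> 'a fls) =
            sscale (of_int (int n - int m)) (vb (n + m))
            - sscale (4 * of_int (int n - int m - 1)) (vb (n + m - 2)))
    \<and> (\<forall>n m. sbr (vb n) (vb m :: 'a fls \<times> 'a fls) = (0 :: 'a fls \<times> 'a fls))"
  using bcca_eq indep_UV inj_ub inj_vb disj_UV br_uu br_uv br_vv by blast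

end
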